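(* Let $r\in\mathbb{Z}_{\ge0}$ and let $\chi$ be a character of $T$ of depth $r$. Then for every integer $n\ge r+1$, every irreducible $\mathcal{K}$-subrepresentation of $V_\chi^{\mathcal{K}_n}$ has depth less than $n$, and $\dim_{\mathbb{C}}V_\chi^{\mathcal{K}_n}=q^{n-1}(q+1)$.
   Context: Let $F$ be a non-archimedean local field with odd residual characteristic, ring of integers $\mathcal{O}_F$, residue field of cardinality $q$. Fix a non-square $\epsilon\in\mathcal{O}_F^\times$, $E=F[\sqrt\epsilon]$ with ring of integers $\mathcal{O}_E$, maximal ideal $\mathfrak{p}_E$; $\overline{x}$ is Galois conjugation. $G=\{g\in\mathrm{GL}_2(E):\overline{g}^{\top}\mathrm{w}g=\mathrm{w}\}$, $\mathrm{w}=\begin{pmatrix}0&1\\1&0\end{pmatrix}$; $\mathcal{K}=G\cap M_2(\mathcal{O}_E)$, $\mathcal{K}_n=\{g\in\mathcal{K}:g\equiv I\bmod\mathfrak{p}_E^n\}$. $B$ upper triangular matrices in $G$, $T=\{t(a)=\mathrm{diag}(a,\overline a^{-1}):a\in E^\times\}$, $U=\{\begin{pmatrix}1&\sqrt\epsilon b\\0&1\end{pmatrix}:b\in F\}$. $T_0=\{t(a):a\in\mathcal{O}_E^\times\}$, $T_n=\{t(a):a\in1+\mathfrak{p}_E^n\}$. A character $\chi$ of $T$ has depth $r$ if $\chi|_{T_r}\ne\mathbbm{1}$, $\chi|_{T_{r+1}}=\mathbbm{1}$; a character trivial on $T_0$ also has depth $0$. $V_\chi$ is the space of locally constant $f:G\to\mathbb{C}$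 with $f(bg)=\chi(b)f(g)$ ($b\in B$; $\chi$ trivial on $U$), $G$ acting by right translation; $V_\chi^{\mathcal{K}_n}$ is its $\mathcal{K}$-stable subspace of $\mathcal{K}_n$-fixed vectors. The depth of an irreducible smooth representation of $\mathcal{K}$ is the least integer $d\ge0$ such that $\mathcal{K}_{d+1}$ acts trivially. *)

theory Defs
  imports Complex_Main "HOL-Library.Function_Algebras"
begin

text \<open>F is a field type 'f with a normalized discrete valuation v (only meaningful
  on nonzero elements).  x is in p_F^m iff x = 0 or v x >= m; O_F = p_F^0.\<close>

definition inP :: "('f::field \<Rightarrow> int) \<Rightarrow> int \<Rightarrow> 'f \<Rightarrow> bool" where
  "inP v m x \<longleftrightarrow> x = 0 \<or> m \<le> v x"

definition OF :: "('f::field \<Rightarrow> int) \<Rightarrow> 'f set" where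
  "OF v = {x. inP v 0 x}"

definition resrel :: "('f::field \<Rightarrow> int) \<Rightarrow> ('f \<times> 'f) set" where
  "resrel v = {(x, y). x \<in> OF v \<and> y \<in> OF v \<and> inP v 1 (x - y)}"

definition residue_field :: "('f::field \<Rightarrow> int) \<Rightarrow> 'f set set" where
  "residue_field v = OF v // resrel v"

definition resq :: "('f::field \<Rightarrow> int) \<Rightarrow> nat" where
  "resq v = card (residue_field v)"

definition discrete_valuation :: "('f::field \<Rightarrow> int) \<Rightarrow> bool" where
  "discrete_valuation v \<longleftrightarrow>
     (\<forall>x y. x \<noteq> 0 \<longrightarrow> y \<noteq> 0 \<longrightarrow> v (x * y) = v x + v y) \<and>
     (\<forall>x y. x \<noteq> 0 \<longrightarrow> y \<noteq> 0 \<longrightarrow> x + y \<noteq> 0 \<longrightarrow> min (v x) (v y) \<le> v (x + y)) \<and>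
     (\<exists>\<pi>. \<pi> \<noteq> 0 \<and> v \<pi> = 1)"

definition valuation_complete :: "('f::field \<Rightarrow> int) \<Rightarrow> bool" where
  "valuation_complete v \<longleftrightarrow>
     (\<forall>s :: nat \<Rightarrow> 'f.
        (\<forall>m. \<exists>N. \<forall>i\<ge>N. \<forall>j\<ge>N. inP v m (s i - s j)) \<longrightarrow>
        (\<exists>L. \<forall>m. \<exists>N. \<forall>i\<ge>N. inP v m (s i - L)))"

definition nonarch_local_field :: "('f::field \<Rightarrow> int) \<Rightarrow> bool" where
  "nonarch_local_field v \<longleftrightarrow> discrete_valuation v \<and> valuation_complete v \<and>
     finite (residue_field v)"

text \<open>An element (a, b) :: 'f \<times> 'f stands for a + b sqrt eps.\<close>
type_synonym 'f qe = "'f \<times> 'f"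

definition eadd :: "'f::field qe \<Rightarrow> 'f qe \<Rightarrow> 'f qe" where
  "eadd z w = (fst z + fst w, snd z + snd w)"

definition esub :: "'f::field qe \<Rightarrow> 'f qe \<Rightarrow> 'f qe" where
  "esub z w = (fst z - fst w, snd z - snd w)"

definition emul :: "'f::field \<Rightarrow> 'f qe \<Rightarrow> 'f qe \<Rightarrow> 'f qe" where
  "emul eps z w = (fst z * fst w + eps * snd z * snd w, fst z * snd w + snd z * fst w)"

definition econj :: "'f::field qe \<Rightarrow> 'f qe" where
  "econj z = (fst z, - snd z)"

definition enorm :: "'f::field \<Rightarrow> 'f qe \<Rightarrow> 'f" where
  "enorm eps z = fst z * fst z - eps * snd z * snd z"

definition einv :: "'f::field \<Rightarrow> 'f qe \<Rightarrow> 'f qe" where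
  "einv eps z = (fst z / enorm eps z, - snd z / enorm eps z)"

definition ezero :: "'f::field qe" where "ezero = (0, 0)"
definition eone :: "'f::field qe" where "eone = (1, 0)"

text \<open>p_E^n = {(a,b). a, b \<in> p_F^n} (E/F unramified since eps is a non-square unit
  and the residue characteristic is odd); O_E = p_E^0.\<close>
definition inPE :: "('f::field \<Rightarrow> int) \<Rightarrow> nat \<Rightarrow> 'f qe \<Rightarrow> bool" where
  "inPE v n z \<longleftrightarrow> inP v (int n) (fst z) \<and> inP v (int n) (snd z)"

definition inOE :: "('f::field \<Rightarrow> int) \<Rightarrow> 'f qe \<Rightarrow> bool" where
  "inOE v z \<longleftrightarrow> inPE v 0 z"

definition unitOE :: "('f::field \<Rightarrow> int) \<Rightarrow> 'f qe \<Rightarrow> bool" where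
  "unitOE v z \<longleftrightarrow> inOE v z \<and> \<not> inPE v 1 z"

datatype 'a m2 = M2 'a 'a 'a 'a

fun m11 :: "'a m2 \<Rightarrow> 'a" where "m11 (M2 a b c d) = a"
fun m12 :: "'a m2 \<Rightarrow> 'a" where "m12 (M2 a b c d) = b"
fun m21 :: "'a m2 \<Rightarrow> 'a" where "m21 (M2 a b c d) = c"
fun m22 :: "'a m2 \<Rightarrow> 'a" where "m22 (M2 a b c d) = d"

definition mmul :: "'f::field \<Rightarrow> 'f qe m2 \<Rightarrow> 'f qe m2 \<Rightarrow> 'f qe m2" where
  "mmul eps g h =
     M2 (eadd (emul eps (m11 g) (m11 h)) (emul eps (m12 g) (m21 h)))
        (eadd (emul eps (m11 g) (m12 h)) (emul eps (m12 g) (m22 h)))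
        (eadd (emul eps (m21 g) (m11 h)) (emul eps (m22 g) (m21 h)))
        (eadd (emul eps (m21 g) (m12 h)) (emul eps (m22 g) (m22 h)))"

definition mdet :: "'f::field \<Rightarrow> 'f qe m2 \<Rightarrow> 'f qe" where
  "mdet eps g = esub (emul eps (m11 g) (m22 g)) (emul eps (m12 g) (m21 g))"

definition mconjT :: "'f::field qe m2 \<Rightarrow> 'f qe m2" where
  "mconjT g = M2 (econj (m11 g)) (econj (m21 g)) (econj (m12 g)) (econj (m22 g))"

definition mid :: "'f::field qe m2" where "mid = M2 eone ezero ezero eone"
definition wmat :: "'f::field qe m2" where "wmat = M2 ezero eone eone ezero"

definition inG :: "'f::field \<Rightarrow> 'f qe m2 \<Rightarrow> bool" where
  "inG eps g \<longleftrightarrow> mdet eps g \<noteq> ezero \<and> mmul eps (mmul eps (mconjT g) wmat) g = wmat"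

definition inB :: "'f::field \<Rightarrow> 'f qe m2 \<Rightarrow> bool" where
  "inB eps g \<longleftrightarrow> inG eps g \<and> m21 g = ezero"

definition inK :: "('f::field \<Rightarrow> int) \<Rightarrow> 'f \<Rightarrow> 'f qe m2 \<Rightarrow> bool" where
  "inK v eps g \<longleftrightarrow> inG eps g \<and> inOE v (m11 g) \<and> inOE v (m12 g) \<and> inOE v (m21 g) \<and> inOE v (m22 g)"

definition inKn :: "('f::field \<Rightarrow> int) \<Rightarrow> 'f \<Rightarrow> nat \<Rightarrow> 'f qe m2 \<Rightarrow> bool" where
  "inKn v eps n g \<longleftrightarrow> inK v eps g \<and>
     inPE v n (esub (m11 g) eone) \<and> inPE v n (m12 g) \<and> inPE v n (m21 g) \<and>
     inPE v n (esub (m22 g) eone)"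

definition tmat :: "'f::field \<Rightarrow> 'f qe \<Rightarrow> 'f qe m2" where
  "tmat eps a = M2 a ezero ezero (econj (einv eps a))"

text \<open>a \<in> E^x with t(a) \<in> T_n: T_0 = t(O_E^x), T_n = t(1 + p_E^n) for n \<ge> 1.\<close>
definition inTn :: "('f::field \<Rightarrow> int) \<Rightarrow> nat \<Rightarrow> 'f qe \<Rightarrow> bool" where
  "inTn v n a \<longleftrightarrow> (if n = 0 then unitOE v a else inPE v n (esub a eone))"

text \<open>A character of T is given by chi : E^x \<rightarrow> C^x, a \<mapsto> chi(t(a)) (t is an
  isomorphism E^x \<cong> T).\<close>
definition is_char_T :: "'f::field \<Rightarrow> ('f qe \<Rightarrow> complex) \<Rightarrow> bool" where
  "is_char_T eps chi \<longleftrightarrow>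
     (\<forall>a. a \<noteq> ezero \<longrightarrow> chi a \<noteq> 0) \<and>
     (\<forall>a b. a \<noteq> ezero \<longrightarrow> b \<noteq> ezero \<longrightarrow> chi (emul eps a b) = chi a * chi b)"

definition char_trivial_on :: "('f::field \<Rightarrow> int) \<Rightarrow> ('f qe \<Rightarrow> complex) \<Rightarrow> nat \<Rightarrow> bool" where
  "char_trivial_on v chi n \<longleftrightarrow> (\<forall>a. inTn v n a \<longrightarrow> chi a = 1)"

definition char_depth :: "('f::field \<Rightarrow> int) \<Rightarrow> ('f qe \<Rightarrow> complex) \<Rightarrow> nat \<Rightarrow> bool" where
  "char_depth v chi r \<longleftrightarrow>
     (\<not> char_trivial_on v chi r \<and> char_trivial_on v chi (r + 1)) \<or>
     (r = 0 \<and> char_trivial_on v chi 0)"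

text \<open>Extension of chi to B = T U, trivial on U: for b = t(a) u one has a = b_11.\<close>
definition chiB :: "('f::field qe \<Rightarrow> complex) \<Rightarrow> 'f qe m2 \<Rightarrow> complex" where
  "chiB chi b = chi (m11 b)"

definition cscale :: "complex \<Rightarrow> ('g \<Rightarrow> complex) \<Rightarrow> ('g \<Rightarrow> complex)" where
  "cscale c f = (\<lambda>x. c * f x)"

definition rtrans :: "'f::field \<Rightarrow> 'f qe m2 \<Rightarrow> ('f qe m2 \<Rightarrow> complex) \<Rightarrow> ('f qe m2 \<Rightarrow> complex)" where
  "rtrans eps k f = (\<lambda>g. f (mmul eps g k))"

text \<open>V_chi: locally constant functions on G (extended by 0 off G) with
  f(bg) = chi(b) f(g).  Local constancy: the K_m form a neighbourhood basis of 1.\<close>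
definition Vchi :: "('f::field \<Rightarrow> int) \<Rightarrow> 'f \<Rightarrow> ('f qe \<Rightarrow> complex) \<Rightarrow> ('f qe m2 \<Rightarrow> complex) set" where
  "Vchi v eps chi = {f.
     (\<forall>g. \<not> inG eps g \<longrightarrow> f g = 0) \<and>
     (\<forall>b g. inB eps b \<longrightarrow> inG eps g \<longrightarrow> f (mmul eps b g) = chiB chi b * f g) \<and>
     (\<forall>g. inG eps g \<longrightarrow> (\<exists>m. \<forall>k. inKn v eps m k \<longrightarrow> f (mmul eps g k) = f g))}"

definition VchiKn :: "('f::field \<Rightarrow> int) \<Rightarrow> 'f \<Rightarrow> ('f qe \<Rightarrow> complex) \<Rightarrow> nat \<Rightarrow> ('f qe m2 \<Rightarrow> complex) set" where
  "VchiKn v eps chi n = {f \<in> Vchi v eps chi. \<forall>k. inKn v eps n k \<longrightarrow> rtrans eps k f = f}"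

definition K_stable :: "('f::field \<Rightarrow> int) \<Rightarrow> 'f \<Rightarrow> ('f qe m2 \<Rightarrow> complex) set \<Rightarrow> bool" where
  "K_stable v eps W \<longleftrightarrow> (\<forall>k f. inK v eps k \<longrightarrow> f \<in> W \<longrightarrow> rtrans eps k f \<in> W)"

definition K_subrep :: "('f::field \<Rightarrow> int) \<Rightarrow> 'f \<Rightarrow> ('f qe m2 \<Rightarrow> complex) set \<Rightarrow> ('f qe m2 \<Rightarrow> complex) set \<Rightarrow> bool" where
  "K_subrep v eps V W \<longleftrightarrow> W \<subseteq> V \<and> module.subspace cscale W \<and> K_stable v eps W"

definition irreducible_K_subrep :: "('f::field \<Rightarrow> int) \<Rightarrow> 'f \<Rightarrow> ('f qe m2 \<Rightarrow> complex) set \<Rightarrow> ('f qe m2 \<Rightarrow> complex) set \<Rightarrow> bool" where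
  "irreducible_K_subrep v eps V W \<longleftrightarrow> K_subrep v eps V W \<and> W \<noteq> {0} \<and>
     (\<forall>W'. K_subrep v eps W W' \<longrightarrow> W' = {0} \<or> W' = W)"

definition rep_depth :: "('f::field \<Rightarrow> int) \<Rightarrow> 'f \<Rightarrow> ('f qe m2 \<Rightarrow> complex) set \<Rightarrow> nat" where
  "rep_depth v eps W = (LEAST d. \<forall>k f. inKn v eps (d + 1) k \<longrightarrow> f \<in> W \<longrightarrow> rtrans eps k f = f)"

end

theory Submission
  imports Defs
begin

lemma vs_cscale: "vector_space (cscale :: complex \<Rightarrow> ('a \<Rightarrow> complex) \<Rightarrow> ('a \<Rightarrow> complex))"
  by unfold_locales (simp_all add: cscale_def fun_eq_iff algebra_simps)

interpretation cs: vector_space "cscale :: complex \<Rightarrow> ('a \<Rightarrow> complex) \<Rightarrow> ('a \<Rightarrow> complex)"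
  by (rule vs_cscale)

lemma sum_fun_apply: "(\<Sum>i\<in>A. F i) x = (\<Sum>i\<in>A. (F i x :: complex))"
  by (induction A rule: infinite_finite_induct) auto

locale dvf =
  fixes v :: "'f::field \<Rightarrow> int"
  assumes dv: "discrete_valuation v"
begin

lemma vmult: "x \<noteq> 0 \<Longrightarrow> y \<noteq> 0 \<Longrightarrow> v (x*y) = v x + v y"
  using dv unfolding discrete_valuation_def by blast

lemma vadd: "x \<noteq> 0 \<Longrightarrow> y \<noteq> 0 \<Longrightarrow> x + y \<noteq> 0 \<Longrightarrow> min (v x) (v y) \<le> v (x+y)"
  using dv unfolding discrete_valuation_def by blast

lemma v1: "v 1 = 0"
  using vmult[of 1 1] by simp

lemma vm1: "v (-1) = 0"
  using vmult[of "-1" "-1"] v1 by simp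

lemma vneg: "v (-x) = v x"
proof (cases "x = 0")
  case False
  then show ?thesis using vmult[of "-1" x] vm1 by simp
qed simp

lemma vinv: "x \<noteq> 0 \<Longrightarrow> v (inverse x) = - v x"
  using vmult[of x "inverse x"] v1 by simp

lemma inP_add: "inP v m x \<Longrightarrow> inP v m y \<Longrightarrow> inP v m (x+y)"
  unfolding inP_def using vadd[of x y] by (cases "x = 0"; cases "y = 0"; cases "x+y=0") auto

lemma inP_uminus: "inP v m x \<Longrightarrow> inP v m (-x)"
  unfolding inP_def using vneg by auto

lemma inP_uminus_iff: "inP v m (-x) = inP v m x"
  using inP_uminus[of m x] inP_uminus[of m "-x"] by auto

lemma inP_diff: "inP v m x \<Longrightarrow> inP v m y \<Longrightarrow> inP v m (x-y)"
  using inP_add[of m x "-y"] inP_uminus[of m y] by simp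

lemma inP_mult: "inP v m x \<Longrightarrow> inP v k y \<Longrightarrow> inP v (m+k) (x*y)"
  unfolding inP_def using vmult[of x y] by (cases "x = 0"; cases "y = 0") auto

lemma inP_mult0: "inP v m x \<Longrightarrow> inP v 0 y \<Longrightarrow> inP v m (x*y)"
  using inP_mult[of m x 0 y] by simp

lemma inP_mult0': "inP v 0 x \<Longrightarrow> inP v m y \<Longrightarrow> inP v m (x*y)"
  using inP_mult[of 0 x m y] by simp

lemma inP_mono: "k \<le> m \<Longrightarrow> inP v m x \<Longrightarrow> inP v k x"
  unfolding inP_def by auto

lemma inP_0[simp]: "inP v m 0"
  unfolding inP_def by auto

lemma inP_1_iff: "inP v m 1 \<longleftrightarrow> m \<le> 0"
  unfolding inP_def using v1 by auto

lemma inP_sum_iff: "inP v m x \<Longrightarrow> inP v m (x + y) = inP v m y"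
  by (metis add_diff_cancel_left' inP_add inP_diff)

definition upi :: 'f where "upi = (SOME p. p \<noteq> 0 \<and> v p = 1)"

lemma upi: "upi \<noteq> 0" "v upi = 1"
proof -
  have "\<exists>p. p \<noteq> 0 \<and> v p = 1" using dv unfolding discrete_valuation_def by blast
  then have "upi \<noteq> 0 \<and> v upi = 1" unfolding upi_def by (rule someI_ex)
  then show "upi \<noteq> 0" "v upi = 1" by auto
qed

lemma vpow: "v (upi ^ k) = int k"
proof (induction k)
  case 0 then show ?case using v1 by simp
next
  case (Suc k) then show ?case using vmult[of upi "upi^k"] upi by simp
qed

lemma inP_pi: "inP v m (upi ^ k * z) \<longleftrightarrow> inP v (m - int k) z"
proof (cases "z = 0")
  case False
  then have "v (upi^k * z) = int k + v z" using vmult[of "upi^k" z] vpow upi by simp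
  then show ?thesis using False upi unfolding inP_def by auto
qed simp

lemma inP_divpi: "inP v m z \<Longrightarrow> z = upi^k * (z / upi^k)"
  using upi by simp

end


definition minv :: "'f::field qe m2 \<Rightarrow> 'f qe m2" where
  "minv g = M2 (econj (m22 g)) (econj (m12 g)) (econj (m21 g)) (econj (m11 g))"

section \<open>The quadratic extension\<close>

locale setting = dvf v for v :: "'f::field \<Rightarrow> int" +
  fixes eps :: 'f
  assumes eps0: "eps \<noteq> 0" and veps: "v eps = 0"
    and nonsq: "\<not> (\<exists>y. y * y = eps)"
    and two: "(2::'f) \<noteq> 0"
begin

abbreviation em (infixl "\<otimes>" 70) where "x \<otimes> y \<equiv> emul eps x y"
abbreviation ea (infixl "\<oplus>" 65) where "x \<oplus> y \<equiv> eadd x y"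
abbreviation es (infixl "\<ominus>" 65) where "x \<ominus> y \<equiv> esub x y"

lemmas edefs = emul_def eadd_def esub_def econj_def ezero_def eone_def enorm_def

lemma emul_comm: "x \<otimes> y = y \<otimes> x"
  by (simp add: edefs algebra_simps)
lemma emul_assoc: "x \<otimes> y \<otimes> z = x \<otimes> (y \<otimes> z)"
  by (simp add: edefs algebra_simps)
lemma emul_one[simp]: "x \<otimes> eone = x" "eone \<otimes> x = x"
  by (simp_all add: edefs)
lemma emul_zero[simp]: "x \<otimes> ezero = ezero" "ezero \<otimes> x = ezero"
  by (simp_all add: edefs)
lemma eadd_zero[simp]: "x \<oplus> ezero = x" "ezero \<oplus> x = x"
  by (simp_all add: edefs)
lemma esub_self[simp]: "x \<ominus> x = ezero"
  by (simp add: edefs)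
lemma esub_eq_zero: "(x \<ominus> y = ezero) = (x = y)"
  by (cases x; cases y) (simp add: edefs)
lemma econj_econj[simp]: "econj (econj x) = x"
  by (simp add: edefs)
lemma econj_mul: "econj (x \<otimes> y) = econj x \<otimes> econj y"
  by (simp add: edefs)
lemma econj_zero_iff[simp]: "(econj x = ezero) = (x = ezero)"
  by (cases x) (simp add: edefs)
lemma econj_one[simp]: "econj eone = eone" "econj ezero = ezero"
  by (simp_all add: edefs)

lemma enorm_mul: "enorm eps (x \<otimes> y) = enorm eps x * enorm eps y"
  by (simp add: edefs algebra_simps)

lemma enorm_zero_iff: "(enorm eps z = 0) = (z = ezero)"
proof
  assume h: "enorm eps z = 0"
  obtain a b where z: "z = (a, b)" by (cases z)
  have e: "a * a = eps * b * b" using h by (simp add: z enorm_def)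
  show "z = ezero"
  proof (cases "b = 0")
    case True
    then show ?thesis using e by (simp add: z ezero_def)
  next
    case False
    then have "(a/b) * (a/b) = eps" using e by (simp add: field_simps)
    then show ?thesis using nonsq by blast
  qed
qed (simp add: edefs)

lemma edomain: "x \<otimes> y = ezero \<Longrightarrow> x = ezero \<or> y = ezero"
proof -
  assume "x \<otimes> y = ezero"
  then have "enorm eps (x \<otimes> y) = 0" by (simp add: enorm_zero_iff)
  then have "enorm eps x = 0 \<or> enorm eps y = 0" by (simp add: enorm_mul)
  then show ?thesis by (simp add: enorm_zero_iff)
qed

lemma emul_nz: "x \<noteq> ezero \<Longrightarrow> y \<noteq> ezero \<Longrightarrow> x \<otimes> y \<noteq> ezero"
  using edomain by blast

lemma cancelA:
  assumes h1: "x \<otimes> a \<oplus> y \<otimes> c = a" and h2: "x \<otimes> b \<oplus> y \<otimes> d = b"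
    and det: "a \<otimes> d \<ominus> b \<otimes> c \<noteq> ezero"
  shows "x = eone \<and> y = ezero"
proof -
  have i1: "(x \<ominus> eone) \<otimes> (a \<otimes> d \<ominus> b \<otimes> c) =
      d \<otimes> (x \<otimes> a \<oplus> y \<otimes> c \<ominus> a) \<ominus> c \<otimes> (x \<otimes> b \<oplus> y \<otimes> d \<ominus> b)"
    by (simp add: edefs algebra_simps)
  have i2: "y \<otimes> (a \<otimes> d \<ominus> b \<otimes> c) =
      a \<otimes> (x \<otimes> b \<oplus> y \<otimes> d \<ominus> b) \<ominus> b \<otimes> (x \<otimes> a \<oplus> y \<otimes> c \<ominus> a)"
    by (simp add: edefs algebra_simps)
  have "(x \<ominus> eone) \<otimes> (a \<otimes> d \<ominus> b \<otimes> c) = ezero" using i1 h1 h2 by simp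
  then have "x \<ominus> eone = ezero" using edomain det by blast
  moreover have "y \<otimes> (a \<otimes> d \<ominus> b \<otimes> c) = ezero" using i2 h1 h2 by simp
  then have "y = ezero" using edomain det by blast
  ultimately show ?thesis by (simp add: esub_eq_zero)
qed

lemma cancelB:
  assumes h1: "x \<otimes> a \<oplus> y \<otimes> c = c" and h2: "x \<otimes> b \<oplus> y \<otimes> d = d"
    and det: "a \<otimes> d \<ominus> b \<otimes> c \<noteq> ezero"
  shows "x = ezero \<and> y = eone"
proof -
  have i1: "x \<otimes> (a \<otimes> d \<ominus> b \<otimes> c) =
      d \<otimes> (x \<otimes> a \<oplus> y \<otimes> c \<ominus> c) \<ominus> c \<otimes> (x \<otimes> b \<oplus> y \<otimes> d \<ominus> d)"
    by (simp add: edefs algebra_simps)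
  have i2: "(y \<ominus> eone) \<otimes> (a \<otimes> d \<ominus> b \<otimes> c) =
      a \<otimes> (x \<otimes> b \<oplus> y \<otimes> d \<ominus> d) \<ominus> b \<otimes> (x \<otimes> a \<oplus> y \<otimes> c \<ominus> c)"
    by (simp add: edefs algebra_simps)
  have "x \<otimes> (a \<otimes> d \<ominus> b \<otimes> c) = ezero" using i1 h1 h2 by simp
  then have "x = ezero" using edomain det by blast
  moreover have "(y \<ominus> eone) \<otimes> (a \<otimes> d \<ominus> b \<otimes> c) = ezero" using i2 h1 h2 by simp
  then have "y \<ominus> eone = ezero" using edomain det by blast
  ultimately show ?thesis by (simp add: esub_eq_zero)
qed


lemma mmul_assoc: "mmul eps (mmul eps a b) c = mmul eps a (mmul eps b c)"
  by (cases a; cases b; cases c) (simp add: mmul_def emul_def eadd_def algebra_simps)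

lemma mmul_mid[simp]: "mmul eps mid g = g" "mmul eps g mid = g"
  by (cases g; simp add: mmul_def mid_def)+

lemma inG_M2: "inG eps (M2 a b c d) \<longleftrightarrow> mdet eps (M2 a b c d) \<noteq> ezero \<and>
   econj c \<otimes> a \<oplus> econj a \<otimes> c = ezero \<and> econj c \<otimes> b \<oplus> econj a \<otimes> d = eone \<and>
   econj d \<otimes> a \<oplus> econj b \<otimes> c = eone \<and> econj d \<otimes> b \<oplus> econj b \<otimes> d = ezero"
  unfolding inG_def by (simp add: mmul_def mconjT_def wmat_def)

lemma mdet_M2: "mdet eps (M2 a b c d) = a \<otimes> d \<ominus> b \<otimes> c"
  by (simp add: mdet_def)

lemma minv_left: "inG eps g \<Longrightarrow> mmul eps (minv g) g = mid"
  by (cases g) (simp add: inG_M2 minv_def mmul_def mid_def)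

lemma cancel_mat: "mmul eps P g = g \<Longrightarrow> mdet eps g \<noteq> ezero \<Longrightarrow> P = mid"
proof (cases P; cases g)
  fix p11 p12 p21 p22 a b c d
  assume h: "mmul eps P g = g" "mdet eps g \<noteq> ezero" and P: "P = M2 p11 p12 p21 p22"
    and g: "g = M2 a b c d"
  have e: "p11 \<otimes> a \<oplus> p12 \<otimes> c = a" "p11 \<otimes> b \<oplus> p12 \<otimes> d = b"
      "p21 \<otimes> a \<oplus> p22 \<otimes> c = c" "p21 \<otimes> b \<oplus> p22 \<otimes> d = d"
    using h(1) by (simp_all add: P g mmul_def)
  have dt: "a \<otimes> d \<ominus> b \<otimes> c \<noteq> ezero" using h(2) by (simp add: g mdet_M2)
  show "P = mid" using cancelA[OF e(1,2) dt] cancelB[OF e(3,4) dt] by (simp add: P mid_def)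
qed

lemma inG_det: "inG eps g \<Longrightarrow> mdet eps g \<noteq> ezero"
  by (simp add: inG_def)

lemma minv_right: "inG eps g \<Longrightarrow> mmul eps g (minv g) = mid"
proof -
  assume g: "inG eps g"
  have "mmul eps (mmul eps g (minv g)) g = g"
    by (simp add: mmul_assoc minv_left[OF g])
  then show ?thesis using cancel_mat inG_det[OF g] by blast
qed

lemma mdet_mul: "mdet eps (mmul eps g h) = mdet eps g \<otimes> mdet eps h"
  by (cases g; cases h) (simp add: mdet_def mmul_def edefs algebra_simps)

lemma mconjT_mul: "mconjT (mmul eps g h) = mmul eps (mconjT h) (mconjT g)"
  by (cases g; cases h) (simp add: mconjT_def mmul_def edefs algebra_simps)

lemma inG_mmul: assumes g: "inG eps g" and h: "inG eps h" shows "inG eps (mmul eps g h)"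
proof -
  have d: "mdet eps (mmul eps g h) \<noteq> ezero"
    using inG_det[OF g] inG_det[OF h] by (simp add: mdet_mul emul_nz)
  have hg: "mmul eps (mconjT g) (mmul eps wmat g) = wmat"
    using g by (simp add: inG_def mmul_assoc)
  have hh: "mmul eps (mconjT h) (mmul eps wmat h) = wmat"
    using h by (simp add: inG_def mmul_assoc)
  have "mmul eps (mmul eps (mconjT (mmul eps g h)) wmat) (mmul eps g h)
      = mmul eps (mconjT h) (mmul eps (mmul eps (mconjT g) (mmul eps wmat g)) h)"
    by (simp add: mconjT_mul mmul_assoc)
  also have "\<dots> = wmat" using hg hh by simp
  finally show ?thesis using d by (simp add: inG_def)
qed

lemma inG_minv: assumes g: "inG eps g" shows "inG eps (minv g)"
proof (cases g)
  fix a b c d assume gg: "g = M2 a b c d"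
  have r: "mmul eps g (minv g) = mid" by (rule minv_right[OF g])
  then have e: "a \<otimes> econj d \<oplus> b \<otimes> econj c = eone" "a \<otimes> econj b \<oplus> b \<otimes> econj a = ezero"
     "c \<otimes> econj d \<oplus> d \<otimes> econj c = ezero" "c \<otimes> econj b \<oplus> d \<otimes> econj a = eone"
    by (simp_all add: gg minv_def mmul_def mid_def)
  have dg: "a \<otimes> d \<ominus> b \<otimes> c \<noteq> ezero" using inG_det[OF g] by (simp add: gg mdet_M2)
  have "econj d \<otimes> econj a \<ominus> econj b \<otimes> econj c = econj (a \<otimes> d \<ominus> b \<otimes> c)"
    by (simp add: edefs algebra_simps)
  then have dm: "econj d \<otimes> econj a \<ominus> econj b \<otimes> econj c \<noteq> ezero" using dg by simp
  show ?thesis using e dm by (simp add: gg minv_def inG_M2 mdet_M2)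
qed

lemma mid_G: "inG eps mid"
  by (simp add: mid_def inG_M2 mdet_M2 edefs)


lemma inP_eps: "inP v 0 eps" using veps by (simp add: inP_def)

lemma inPE_add: "inPE v n a \<Longrightarrow> inPE v n b \<Longrightarrow> inPE v n (a \<oplus> b)"
  by (simp add: inPE_def eadd_def inP_add)
lemma inPE_sub: "inPE v n a \<Longrightarrow> inPE v n b \<Longrightarrow> inPE v n (a \<ominus> b)"
  by (simp add: inPE_def esub_def inP_diff)
lemma inPE_conj: "inPE v n a \<Longrightarrow> inPE v n (econj a)"
  by (simp add: inPE_def econj_def inP_uminus)
lemma inPE_conj_iff: "inPE v n (econj a) = inPE v n a"
  using inPE_conj[of n a] inPE_conj[of n "econj a"] by auto
lemma inPE_mulL: "inPE v n a \<Longrightarrow> inOE v b \<Longrightarrow> inPE v n (a \<otimes> b)"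
proof -
  assume a: "inPE v n a" and b: "inOE v b"
  have 1: "inP v (int n) (fst a * fst b)" using a b by (simp add: inPE_def inOE_def inP_mult0)
  have "inP v (int n) (eps * snd a)" using a inP_mult0'[OF inP_eps] by (simp add: inPE_def)
  then have 2: "inP v (int n) (eps * snd a * snd b)" using b by (simp add: inPE_def inOE_def inP_mult0)
  have 3: "inP v (int n) (fst a * snd b)" using a b by (simp add: inPE_def inOE_def inP_mult0)
  have 4: "inP v (int n) (snd a * fst b)" using a b by (simp add: inPE_def inOE_def inP_mult0)
  show ?thesis using 1 2 3 4 by (simp add: inPE_def emul_def inP_add)
qed
lemma inPE_mulR: "inOE v a \<Longrightarrow> inPE v n b \<Longrightarrow> inPE v n (a \<otimes> b)"
  using inPE_mulL[of n b a] by (simp add: emul_comm)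
lemma inPE_mono: "m \<le> n \<Longrightarrow> inPE v n a \<Longrightarrow> inPE v m a"
  unfolding inPE_def using inP_mono[of "int m" "int n"] by auto
lemma inPE_OE: "inPE v n a \<Longrightarrow> inOE v a"
  unfolding inOE_def using inPE_mono[of 0 n a] by simp
lemma inPE_zero[simp]: "inPE v n ezero"
  by (simp add: inPE_def ezero_def)
lemma inOE_one[simp]: "inOE v eone"
  by (simp add: inOE_def inPE_def eone_def inP_1_iff)
lemma inOE_zero[simp]: "inOE v ezero"
  by (simp add: inOE_def)
lemma inOE_add: "inOE v a \<Longrightarrow> inOE v b \<Longrightarrow> inOE v (a \<oplus> b)"
  unfolding inOE_def by (rule inPE_add)
lemma inOE_sub: "inOE v a \<Longrightarrow> inOE v b \<Longrightarrow> inOE v (a \<ominus> b)"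
  unfolding inOE_def by (rule inPE_sub)
lemma inOE_mul: "inOE v a \<Longrightarrow> inOE v b \<Longrightarrow> inOE v (a \<otimes> b)"
  unfolding inOE_def using inPE_mulL[of 0 a b] by (simp add: inOE_def)
lemma inOE_conj: "inOE v a \<Longrightarrow> inOE v (econj a)"
  unfolding inOE_def by (rule inPE_conj)

lemmas Eclos = inPE_add inPE_sub inPE_conj inPE_mulL inPE_mulR inOE_add inOE_sub inOE_mul inOE_conj
  inOE_one inOE_zero inPE_zero

lemma inK_M2: "inK v eps (M2 a b c d) \<longleftrightarrow> inG eps (M2 a b c d) \<and> inOE v a \<and> inOE v b \<and> inOE v c \<and> inOE v d"
  by (simp add: inK_def)

lemma inKn_M2: "inKn v eps n (M2 a b c d) \<longleftrightarrow> inK v eps (M2 a b c d) \<and>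
    inPE v n (a \<ominus> eone) \<and> inPE v n b \<and> inPE v n c \<and> inPE v n (d \<ominus> eone)"
  by (simp add: inKn_def)

lemma inK_mmul: assumes g: "inK v eps g" and h: "inK v eps h" shows "inK v eps (mmul eps g h)"
proof -
  have "inG eps (mmul eps g h)" using g h inG_mmul by (simp add: inK_def)
  moreover have "inOE v (m11 (mmul eps g h)) \<and> inOE v (m12 (mmul eps g h)) \<and>
     inOE v (m21 (mmul eps g h)) \<and> inOE v (m22 (mmul eps g h))"
    using g h by (cases g; cases h) (simp add: inK_def mmul_def Eclos)
  ultimately show ?thesis by (simp add: inK_def)
qed

lemma inK_minv: assumes g: "inK v eps g" shows "inK v eps (minv g)"
proof -
  have "inG eps (minv g)" using g inG_minv by (simp add: inK_def)
  moreover have "inOE v (m11 (minv g)) \<and> inOE v (m12 (minv g)) \<and>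
     inOE v (m21 (minv g)) \<and> inOE v (m22 (minv g))"
    using g by (cases g) (simp add: inK_def minv_def Eclos)
  ultimately show ?thesis by (simp add: inK_def)
qed

lemma mid_K: "inK v eps mid"
  by (simp add: inK_def mid_G) (simp add: mid_def)

lemma mid_Kn: "inKn v eps n mid"
  by (simp add: inKn_def mid_K) (simp add: mid_def)

lemma econj_esub: "econj (a \<ominus> b) = econj a \<ominus> econj b"
  by (simp add: edefs)

lemma inKn_K: "inKn v eps n g \<Longrightarrow> inK v eps g"
  by (simp add: inKn_def)

lemma inKn_minv: "inKn v eps n g \<Longrightarrow> inKn v eps n (minv g)"
proof (cases g)
  fix a b c d assume g: "g = M2 a b c d" and h: "inKn v eps n g"
  have "inK v eps (minv g)" using h inK_minv inKn_K by blast
  moreover have "econj d \<ominus> eone = econj (d \<ominus> eone)" "econj a \<ominus> eone = econj (a \<ominus> eone)"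
    by (simp_all add: edefs)
  ultimately show ?thesis using h by (simp add: g minv_def inKn_M2 inPE_conj_iff)
qed

lemma inKn_mmul:
  assumes g: "inKn v eps n g" and h: "inKn v eps n h" shows "inKn v eps n (mmul eps g h)"
proof (cases g; cases h)
  fix a b c d a' b' c' d' assume gg: "g = M2 a b c d" and hh: "h = M2 a' b' c' d'"
  have K: "inK v eps (mmul eps g h)" using g h inK_mmul inKn_K by blast
  have o: "inOE v a" "inOE v b" "inOE v c" "inOE v d" "inOE v a'" "inOE v b'" "inOE v c'" "inOE v d'"
    using g h by (simp_all add: gg hh inKn_M2 inK_M2)
  have p: "inPE v n (a \<ominus> eone)" "inPE v n b" "inPE v n c" "inPE v n (d \<ominus> eone)"
     "inPE v n (a' \<ominus> eone)" "inPE v n b'" "inPE v n c'" "inPE v n (d' \<ominus> eone)"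
    using g h by (simp_all add: gg hh inKn_M2)
  have i1: "a \<otimes> a' \<oplus> b \<otimes> c' \<ominus> eone = (a \<ominus> eone) \<otimes> a' \<oplus> (a' \<ominus> eone) \<oplus> b \<otimes> c'"
    by (simp add: edefs algebra_simps)
  have i2: "c \<otimes> b' \<oplus> d \<otimes> d' \<ominus> eone = c \<otimes> b' \<oplus> (d \<ominus> eone) \<otimes> d' \<oplus> (d' \<ominus> eone)"
    by (simp add: edefs algebra_simps)
  have "inPE v n (a \<otimes> a' \<oplus> b \<otimes> c' \<ominus> eone)" unfolding i1 using o p by (simp add: Eclos)
  moreover have "inPE v n (c \<otimes> b' \<oplus> d \<otimes> d' \<ominus> eone)" unfolding i2 using o p by (simp add: Eclos)
  moreover have "inPE v n (a \<otimes> b' \<oplus> b \<otimes> d')" "inPE v n (c \<otimes> a' \<oplus> d \<otimes> c')"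
    using o p by (simp_all add: Eclos)
  ultimately show ?thesis using K by (simp add: gg hh mmul_def inKn_def)
qed

lemma inB_M2: "inB eps g \<Longrightarrow> \<exists>a b d. g = M2 a b ezero d"
  by (cases g) (auto simp: inB_def)

lemma ezero_ne_eone[simp]: "ezero \<noteq> eone" "eone \<noteq> ezero"
  by (simp_all add: edefs)

lemma inB_mmul: "inB eps g \<Longrightarrow> inB eps h \<Longrightarrow> inB eps (mmul eps g h)"
  unfolding inB_def by (auto simp: inG_mmul) (simp add: mmul_def)

lemma inB_minv: "inB eps g \<Longrightarrow> inB eps (minv g)"
  unfolding inB_def by (auto simp: inG_minv) (simp add: minv_def)

lemma inB_m11: assumes g: "inB eps g" shows "m11 g \<noteq> ezero"
proof -
  obtain a b d where gg: "g = M2 a b ezero d" using inB_M2[OF g] by blast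
  have "econj d \<otimes> a \<oplus> econj b \<otimes> ezero = eone" using g unfolding gg inB_def inG_M2 by blast
  then show ?thesis by (auto simp: gg)
qed

lemma inB_m11_mul: "inB eps h \<Longrightarrow> m11 (mmul eps g h) = m11 g \<otimes> m11 h"
  unfolding inB_def by (cases g; cases h) (auto simp: mmul_def)

end


section \<open>Representatives of O_F / p^k\<close>

locale lfield = dvf v for v :: "'f::field \<Rightarrow> int" +
  assumes fin: "finite (residue_field v)"
begin

lemma equiv_res: "equiv (OF v) (resrel v)"
proof (rule equivI)
  show "resrel v \<subseteq> OF v \<times> OF v" unfolding resrel_def by auto
  show "refl_on (OF v) (resrel v)"
    unfolding refl_on_def resrel_def by auto
  show "sym (resrel v)"
    unfolding sym_def resrel_def using inP_uminus by fastforce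
  show "trans (resrel v)"
  proof (rule transI)
    fix x y z assume "(x, y) \<in> resrel v" "(y, z) \<in> resrel v"
    then show "(x, z) \<in> resrel v"
      using inP_add[of 1 "x - y" "y - z"] unfolding resrel_def by simp
  qed
qed

definition Tr :: "'f set" where "Tr = (\<lambda>C. SOME x. x \<in> C) ` residue_field v"

lemma Tr_mem: "C \<in> residue_field v \<Longrightarrow> (SOME x. x \<in> C) \<in> C"
  unfolding residue_field_def
  using in_quotient_imp_non_empty[OF equiv_res] by (simp add: some_in_eq)

lemma Tr_O: "t \<in> Tr \<Longrightarrow> inP v 0 t"
  unfolding Tr_def using Tr_mem in_quotient_imp_subset[OF equiv_res]
  unfolding residue_field_def OF_def by blast

lemma Tr_inj: "inj_on (\<lambda>C. SOME x. x \<in> C) (residue_field v)"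
proof (rule inj_onI)
  fix C C' assume C: "C \<in> residue_field v" and C': "C' \<in> residue_field v"
    and e: "(SOME x. x \<in> C) = (SOME x. x \<in> C')"
  have "(SOME x. x \<in> C) \<in> C \<inter> C'" using Tr_mem[OF C] Tr_mem[OF C'] e by simp
  then show "C = C'" using quotient_disj[OF equiv_res] C C' unfolding residue_field_def by blast
qed

lemma card_Tr: "card Tr = resq v"
  unfolding Tr_def resq_def using card_image[OF Tr_inj] by simp

lemma finite_Tr: "finite Tr"
  unfolding Tr_def using fin by simp

lemma Tr_dist: "t \<in> Tr \<Longrightarrow> t' \<in> Tr \<Longrightarrow> inP v 1 (t - t') \<Longrightarrow> t = t'"
proof -
  assume t: "t \<in> Tr" and t': "t' \<in> Tr" and d: "inP v 1 (t - t')"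
  obtain C where C: "C \<in> residue_field v" "t = (SOME x. x \<in> C)" using t unfolding Tr_def by blast
  obtain C' where C': "C' \<in> residue_field v" "t' = (SOME x. x \<in> C')" using t' unfolding Tr_def by blast
  have "t \<in> C" "t' \<in> C'" using Tr_mem C C' by auto
  moreover have "(t, t') \<in> resrel v" using d Tr_O t t' unfolding resrel_def OF_def by auto
  ultimately have "C = C'"
    using C(1) C'(1) quotient_eqI[OF equiv_res] unfolding residue_field_def by blast
  then show ?thesis using C C' by simp
qed

lemma Tr_complete: "inP v 0 y \<Longrightarrow> \<exists>t\<in>Tr. inP v 1 (y - t)"
proof -
  assume y: "inP v 0 y"
  let ?C = "resrel v `` {y}"
  have C: "?C \<in> residue_field v" unfolding residue_field_def using y
    by (simp add: quotientI OF_def)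
  let ?t = "SOME x. x \<in> ?C"
  have "?t \<in> ?C" using Tr_mem[OF C] .
  then have "inP v 1 (y - ?t)" unfolding resrel_def by auto
  moreover have "?t \<in> Tr" unfolding Tr_def using C by blast
  ultimately show ?thesis by blast
qed

primrec Sr :: "nat \<Rightarrow> 'f set" where
  "Sr 0 = {0}"
| "Sr (Suc k) = (\<lambda>(s, t). s + upi ^ k * t) ` (Sr k \<times> Tr)"

lemma Sr_O: "s \<in> Sr k \<Longrightarrow> inP v 0 s"
proof (induction k arbitrary: s)
  case (Suc k)
  then obtain s0 t where st: "s0 \<in> Sr k" "t \<in> Tr" "s = s0 + upi ^ k * t" by auto
  have "inP v 0 (upi ^ k * t)" using inP_pi[of 0 k t] Tr_O[OF st(2)] inP_mono[of "0 - int k" 0 t]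
    by simp
  then show ?case using Suc.IH[OF st(1)] st(3) inP_add by simp
qed simp

lemma Sr_dist: "s \<in> Sr k \<Longrightarrow> s' \<in> Sr k \<Longrightarrow> inP v (int k) (s - s') \<Longrightarrow> s = s'"
proof (induction k arbitrary: s s')
  case (Suc k)
  obtain s0 t where st: "s0 \<in> Sr k" "t \<in> Tr" "s = s0 + upi ^ k * t" using Suc.prems by auto
  obtain s0' t' where st': "s0' \<in> Sr k" "t' \<in> Tr" "s' = s0' + upi ^ k * t'" using Suc.prems by auto
  have pk: "inP v (int k) (upi ^ k * (t - t'))" using inP_pi[of "int k" k "t - t'"]
    Tr_O[OF st(2)] Tr_O[OF st'(2)] inP_diff by simp
  have d: "s - s' = (s0 - s0') + upi ^ k * (t - t')" using st st' by (simp add: algebra_simps)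
  have "inP v (int k) (s - s')" using Suc.prems(3) inP_mono[of "int k" "int (Suc k)"] by simp
  then have "inP v (int k) (s0 - s0')" using d pk inP_diff[of "int k" "s - s'" "upi ^ k * (t - t')"] by simp
  then have e: "s0 = s0'" using Suc.IH st st' by blast
  then have "inP v (int (Suc k)) (upi ^ k * (t - t'))" using d Suc.prems(3) by simp
  then have "inP v 1 (t - t')" using inP_pi[of "int (Suc k)" k "t - t'"] by simp
  then have "t = t'" using Tr_dist st st' by blast
  then show ?case using e st st' by simp
qed simp

lemma Sr_complete: "inP v 0 y \<Longrightarrow> \<exists>s\<in>Sr k. inP v (int k) (y - s)"
proof (induction k)
  case 0 then show ?case by simp
next
  case (Suc k)
  then obtain s where s: "s \<in> Sr k" "inP v (int k) (y - s)" by blast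
  define z where "z = (y - s) / upi ^ k"
  have yz: "y - s = upi ^ k * z" unfolding z_def using upi by simp
  have "inP v 0 z" using s(2) yz inP_pi[of "int k" k z] by simp
  then obtain t where t: "t \<in> Tr" "inP v 1 (z - t)" using Tr_complete by blast
  have "y - (s + upi ^ k * t) = upi ^ k * (z - t)" using yz by (simp add: algebra_simps)
  moreover have "inP v (int (Suc k)) (upi ^ k * (z - t))" using inP_pi[of "int (Suc k)" k "z - t"] t by simp
  moreover have "s + upi ^ k * t \<in> Sr (Suc k)" using s t by auto
  ultimately show ?case by metis
qed

lemma Sr_card: "finite (Sr k) \<and> card (Sr k) = resq v ^ k"
proof (induction k)
  case 0 then show ?case by simp
next
  case (Suc k)
  have inj: "inj_on (\<lambda>(s, t). s + upi ^ k * t) (Sr k \<times> Tr)"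
  proof (rule inj_onI, clarify)
    fix s t s' t' assume a: "s \<in> Sr k" "t \<in> Tr" "s' \<in> Sr k" "t' \<in> Tr"
      and e: "s + upi ^ k * t = s' + upi ^ k * t'"
    have d: "s - s' = upi ^ k * (t' - t)" using e by (simp add: algebra_simps)
    have "inP v (int k) (s - s')" using d inP_pi[of "int k" k "t' - t"]
      Tr_O[OF a(2)] Tr_O[OF a(4)] inP_diff by simp
    then have "s = s'" using Sr_dist a by blast
    then have "upi ^ k * (t' - t) = 0" using d by simp
    then show "s = s' \<and> t = t'" using \<open>s = s'\<close> upi by simp
  qed
  have "card (Sr (Suc k)) = card (Sr k \<times> Tr)" using card_image[OF inj] by simp
  also have "\<dots> = resq v ^ Suc k" using Suc card_Tr by (simp add: card_cartesian_product)
  finally show ?case using Suc finite_Tr by simp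
qed

end


section \<open>Double cosets\<close>

definition kA :: "'f::field \<Rightarrow> 'f qe m2" where "kA y = M2 eone ezero (0, y) eone"
definition kB :: "'f::field \<Rightarrow> 'f qe m2" where "kB x = M2 ezero eone eone (0, x)"
definition uU :: "'f::field \<Rightarrow> 'f qe m2" where "uU x = M2 eone (0, x) ezero eone"

locale main = setting v eps + lfield v for v :: "'f::field \<Rightarrow> int" and eps :: 'f +
  fixes n :: nat and chi :: "'f qe \<Rightarrow> complex"
  assumes n1: "n \<ge> 1"
    and chimul: "\<And>a b. a \<noteq> ezero \<Longrightarrow> b \<noteq> ezero \<Longrightarrow> chi (a \<otimes> b) = chi a * chi b"
    and chinz: "\<And>a. a \<noteq> ezero \<Longrightarrow> chi a \<noteq> 0"
    and chitriv: "\<And>a. inPE v n (a \<ominus> eone) \<Longrightarrow> chi a = 1"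
begin

definition SA where "SA = Sr n"
definition SB where "SB = (\<lambda>s. upi * s) ` Sr (n - 1)"
definition R where "R = kA ` SA \<union> kB ` SB"

lemma inOE_pure: "inP v 0 y \<Longrightarrow> inOE v (0, y)"
  by (simp add: inOE_def inPE_def)

lemma inPE_pure: "inP v (int k) y \<Longrightarrow> inPE v k (0, y)"
  by (simp add: inPE_def)

lemma kA_K: "inP v 0 y \<Longrightarrow> inK v eps (kA y)"
  by (simp add: kA_def inK_M2 inG_M2 mdet_M2 inOE_pure) (simp add: edefs)

lemma kB_K: "inP v 0 x \<Longrightarrow> inK v eps (kB x)"
  by (simp add: kB_def inK_M2 inG_M2 mdet_M2 inOE_pure) (simp add: edefs)

lemma uU_K: "inP v 0 x \<Longrightarrow> inK v eps (uU x)"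
  by (simp add: uU_def inK_M2 inG_M2 mdet_M2 inOE_pure) (simp add: edefs)

lemma kA_Kn: "inP v (int n) y \<Longrightarrow> inKn v eps n (kA y)"
  using kA_K[of y] inP_mono[of 0 "int n" y]
  by (simp add: inKn_def kA_def inPE_pure)

lemma uU_Kn: "inP v (int n) y \<Longrightarrow> inKn v eps n (uU y)"
  using uU_K[of y] inP_mono[of 0 "int n" y]
  by (simp add: inKn_def uU_def inPE_pure)

lemma kA_split: "kA y = mmul eps (kA y0) (kA (y - y0))"
  by (simp add: kA_def mmul_def edefs)

lemma kB_split: "kB x = mmul eps (kB x0) (uU (x - x0))"
  by (simp add: kB_def uU_def mmul_def edefs)

lemma SA_O: "y \<in> SA \<Longrightarrow> inP v 0 y"
  unfolding SA_def by (rule Sr_O)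

lemma SB_P: assumes x: "x \<in> SB" shows "inP v 1 x"
proof -
  obtain s where s: "s \<in> Sr (n - 1)" "x = upi * s" using x unfolding SB_def by blast
  have "inP v 1 upi" using upi by (simp add: inP_def)
  then show ?thesis using inP_mult[of 1 upi 0 s] Sr_O[OF s(1)] s(2) by simp
qed

lemma SB_O: "x \<in> SB \<Longrightarrow> inP v 0 x"
  using SB_P[of x] inP_mono[of 0 1 x] by simp

lemma R_K: "k \<in> R \<Longrightarrow> inK v eps k"
  unfolding R_def using kA_K kB_K SA_O SB_O by auto

lemma SA_complete: "inP v 0 y \<Longrightarrow> \<exists>y0\<in>SA. inP v (int n) (y - y0)"
  unfolding SA_def by (rule Sr_complete)

lemma SB_complete: assumes x: "inP v 1 x" shows "\<exists>x0\<in>SB. inP v (int n) (x - x0)"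
proof -
  define z where "z = x / upi"
  have xz: "x = upi ^ 1 * z" unfolding z_def using upi by simp
  have "inP v 0 z" using x xz inP_pi[of 1 1 z] by simp
  then obtain s where s: "s \<in> Sr (n - 1)" "inP v (int (n - 1)) (z - s)" using Sr_complete by blast
  have "x - upi * s = upi ^ 1 * (z - s)" using xz by (simp add: algebra_simps)
  moreover have "inP v (int n) (upi ^ 1 * (z - s))" using inP_pi[of "int n" 1 "z - s"] s n1 by simp
  moreover have "upi * s \<in> SB" unfolding SB_def using s by blast
  ultimately show ?thesis by metis
qed

lemma SA_dist: "y \<in> SA \<Longrightarrow> y' \<in> SA \<Longrightarrow> inP v (int n) (y - y') \<Longrightarrow> y = y'"
  unfolding SA_def by (rule Sr_dist)

lemma SB_dist: assumes x: "x \<in> SB" "x' \<in> SB" and d: "inP v (int n) (x - x')" shows "x = x'"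
proof -
  obtain s s' where s: "s \<in> Sr (n - 1)" "s' \<in> Sr (n - 1)" "x = upi * s" "x' = upi * s'"
    using x unfolding SB_def by blast
  have "x - x' = upi ^ 1 * (s - s')" using s by (simp add: algebra_simps)
  then have "inP v (int (n - 1)) (s - s')" using d inP_pi[of "int n" 1 "s - s'"] n1 by simp
  then show ?thesis using Sr_dist s by blast
qed

lemma iso_split:
  assumes iso: "c \<otimes> econj d \<oplus> d \<otimes> econj c = ezero" and nz: "\<not> (c = ezero \<and> d = ezero)"
  shows "(\<exists>y. inP v 0 y \<and> c = (0, y) \<otimes> d) \<or> (\<exists>x. inP v 1 x \<and> d = (0, x) \<otimes> c)"
proof (cases "d = ezero")
  case True
  then show ?thesis by (intro disjI2 exI[of _ 0]) (simp add: edefs)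
next
  case False
  obtain c1 c2 d1 d2 where cd: "c = (c1, c2)" "d = (d1, d2)" by fastforce
  have f0: "fst (c \<otimes> econj d \<oplus> d \<otimes> econj c) = 0" using iso by (simp add: ezero_def)
  have "fst (c \<otimes> econj d \<oplus> d \<otimes> econj c) = 2 * (c1 * d1 - eps * c2 * d2)"
    by (simp add: cd edefs algebra_simps)
  then have "2 * (c1 * d1 - eps * c2 * d2) = 0" using f0 by simp
  then have i: "c1 * d1 - eps * c2 * d2 = 0" using two by simp
  define N where "N = d1 * d1 - eps * d2 * d2"
  have N0: "N \<noteq> 0" using False enorm_zero_iff[of d] by (simp add: N_def cd enorm_def)
  define y where "y = (c2 * d1 - c1 * d2) / N"
  have "c1 * N = eps * d2 * (c2 * d1 - c1 * d2)"
  proof -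
    have "c1 * N - eps * d2 * (c2 * d1 - c1 * d2) = d1 * (c1 * d1 - eps * c2 * d2)"
      by (simp add: N_def algebra_simps)
    also have "\<dots> = 0" by (simp only: i mult_zero_right)
    finally show ?thesis by simp
  qed
  then have e1: "c1 = eps * y * d2" using N0 by (simp add: y_def field_simps)
  have "c2 * N = d1 * (c2 * d1 - c1 * d2)"
  proof -
    have "c2 * N - d1 * (c2 * d1 - c1 * d2) = d2 * (c1 * d1 - eps * c2 * d2)"
      by (simp add: N_def algebra_simps)
    also have "\<dots> = 0" by (simp only: i mult_zero_right)
    finally show ?thesis by simp
  qed
  then have e2: "c2 = y * d1" using N0 by (simp add: y_def field_simps)
  have cy: "c = (0, y) \<otimes> d" using e1 e2 by (simp add: cd edefs)
  show ?thesis
  proof (cases "inP v 0 y")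
    case True
    then show ?thesis using cy by blast
  next
    case nP: False
    then have y0: "y \<noteq> 0" and vy: "v y < 0" by (auto simp: inP_def)
    define x where "x = inverse (eps * y)"
    have "v x = - v y" unfolding x_def using vinv[of "eps * y"] vmult[of eps y] eps0 y0 veps by simp
    then have "inP v 1 x" using vy by (simp add: inP_def)
    moreover have "d = (0, x) \<otimes> c" using cy eps0 y0 by (simp add: cd x_def edefs field_simps)
    ultimately show ?thesis by blast
  qed
qed

lemma minv_kA: "minv (kA y) = kA (- y)"
  by (simp add: minv_def kA_def edefs)

lemma minv_kB: "minv (kB x) = M2 (0, - x) eone eone ezero"
  by (simp add: minv_def kB_def edefs)

lemma coverage:
  assumes g: "inG eps g"
  shows "\<exists>b k0 k1. inB eps b \<and> k0 \<in> R \<and> inKn v eps n k1 \<and> g = mmul eps (mmul eps b k0) k1"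
proof -
  obtain a b c d where gg: "g = M2 a b c d" by (cases g)
  have "mmul eps g (minv g) = mid" by (rule minv_right[OF g])
  then have iso: "c \<otimes> econj d \<oplus> d \<otimes> econj c = ezero"
    by (simp add: gg minv_def mmul_def mid_def)
  have nz: "\<not> (c = ezero \<and> d = ezero)" using inG_det[OF g] by (auto simp: gg mdet_M2)
  have bk: "g = mmul eps (mmul eps g (minv k)) k" if "inG eps k" for k
    by (simp add: mmul_assoc minv_left[OF that])
  show ?thesis
  proof (cases "\<exists>y. inP v 0 y \<and> c = (0, y) \<otimes> d")
    case True
    then obtain y where y: "inP v 0 y" "c = (0, y) \<otimes> d" by blast
    obtain y0 where y0: "y0 \<in> SA" "inP v (int n) (y - y0)" using SA_complete[OF y(1)] by blast
    have kG: "inG eps (kA y)" using kA_K[OF y(1)] by (simp add: inK_def)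
    define h where "h = mmul eps g (minv (kA y))"
    have "m21 h = ezero" unfolding h_def using y(2)
      by (simp only: minv_kA) (simp add: gg kA_def mmul_def edefs)
    then have hB: "inB eps h" unfolding inB_def h_def using inG_mmul[OF g inG_minv[OF kG]] by simp
    have "g = mmul eps h (kA y)" unfolding h_def by (rule bk[OF kG])
    also have "\<dots> = mmul eps (mmul eps h (kA y0)) (kA (y - y0))"
      by (simp add: mmul_assoc kA_split[of y y0])
    finally show ?thesis using hB y0 kA_Kn[OF y0(2)] unfolding R_def by blast
  next
    case False
    then obtain x where x: "inP v 1 x" "d = (0, x) \<otimes> c" using iso_split[OF iso nz] by blast
    obtain x0 where x0: "x0 \<in> SB" "inP v (int n) (x - x0)" using SB_complete[OF x(1)] by blast
    have kG: "inG eps (kB x)" using kB_K[of x] x(1) inP_mono[of 0 1 x] by (simp add: inK_def)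
    define h where "h = mmul eps g (minv (kB x))"
    have "m21 h = ezero" unfolding h_def using x(2)
      by (simp only: minv_kB) (simp add: gg mmul_def edefs)
    then have hB: "inB eps h" unfolding inB_def h_def using inG_mmul[OF g inG_minv[OF kG]] by simp
    have "g = mmul eps h (kB x)" unfolding h_def by (rule bk[OF kG])
    also have "\<dots> = mmul eps (mmul eps h (kB x0)) (uU (x - x0))"
      by (simp add: mmul_assoc kB_split[of x x0])
    finally show ?thesis using hB x0 uU_Kn[OF x0(2)] unfolding R_def by blast
  qed
qed


lemma not_P1_one: "\<not> inPE v 1 eone"
  by (simp add: inPE_def eone_def inP_1_iff)

lemma sep_core:
  assumes X: "inB eps X" and m: "inKn v eps n m" and k0: "k0 \<in> R" and k0': "k0' \<in> R"
    and e: "mmul eps X k0 = mmul eps k0' m"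
  shows "k0 = k0' \<and> inPE v n (m11 X \<ominus> eone)"
proof -
  obtain \<alpha> \<beta> \<delta> where XX: "X = M2 \<alpha> \<beta> ezero \<delta>" using inB_M2[OF X] by blast
  obtain p q r s where mm: "m = M2 p q r s" by (cases m)
  have mp: "inPE v n (p \<ominus> eone)" "inPE v n q" "inPE v n r" "inPE v n (s \<ominus> eone)"
    using m by (simp_all add: mm inKn_M2)
  have mo: "inOE v p" "inOE v q" "inOE v r" "inOE v s"
    using m by (simp_all add: mm inKn_M2 inK_M2)
  have mp1: "inPE v 1 (p \<ominus> eone)" "inPE v 1 q" "inPE v 1 r" "inPE v 1 (s \<ominus> eone)"
    using mp inPE_mono[OF n1] by auto
  have cases: "(\<exists>y\<in>SA. k0 = kA y) \<or> (\<exists>x\<in>SB. k0 = kB x)" "(\<exists>y\<in>SA. k0' = kA y) \<or> (\<exists>x\<in>SB. k0' = kB x)"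
    using k0 k0' unfolding R_def by auto
  show ?thesis
  proof (cases "\<exists>y\<in>SA. k0 = kA y")
    case True
    then obtain y where y: "y \<in> SA" "k0 = kA y" by blast
    have yo: "inOE v (0, y)" using SA_O[OF y(1)] inOE_pure by blast
    show ?thesis
    proof (cases "\<exists>y\<in>SA. k0' = kA y")
      case True
      then obtain y' where y': "y' \<in> SA" "k0' = kA y'" by blast
      have yo': "inOE v (0, y')" using SA_O[OF y'(1)] inOE_pure by blast
      have E: "\<alpha> \<oplus> \<beta> \<otimes> (0, y) = p" "\<beta> = q" "\<delta> \<otimes> (0, y) = (0, y') \<otimes> p \<oplus> r"
          "\<delta> = (0, y') \<otimes> q \<oplus> s"
        using e by (auto simp add: XX mm y y' kA_def mmul_def)
      have "\<alpha> \<ominus> eone = (\<alpha> \<oplus> \<beta> \<otimes> (0, y) \<ominus> eone) \<ominus> \<beta> \<otimes> (0, y)"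
        by (simp add: edefs algebra_simps)
      also have "\<dots> = (p \<ominus> eone) \<ominus> q \<otimes> (0, y)" by (simp only: E(1)) (simp only: E(2))
      finally have a1: "inPE v n (\<alpha> \<ominus> eone)" using mp yo by (simp add: Eclos)
      have "\<delta> \<ominus> eone = (0, y') \<otimes> q \<oplus> (s \<ominus> eone)"
        by (subst E(4)) (simp add: edefs algebra_simps)
      then have d1: "inPE v n (\<delta> \<ominus> eone)" using mp yo' by (simp add: Eclos)
      have "(0, y') \<otimes> (p \<ominus> eone) \<oplus> r \<ominus> (\<delta> \<ominus> eone) \<otimes> (0, y)
          = ((0, y') \<otimes> p \<oplus> r) \<ominus> \<delta> \<otimes> (0, y) \<oplus> (0, y) \<ominus> (0, y')"
        by (simp add: edefs algebra_simps)
      also have "\<dots> = (0, y) \<ominus> (0, y')" by (simp only: E(3) esub_self eadd_zero)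
      finally have "inPE v n ((0, y) \<ominus> (0, y'))"
        using mp yo yo' d1 by (metis Eclos)
      then have "inP v (int n) (y - y')" by (simp add: inPE_def esub_def)
      then have "y = y'" using SA_dist y y' by blast
      then show ?thesis using a1 y y' by (simp add: XX)
    next
      case False
      then obtain x' where x': "x' \<in> SB" "k0' = kB x'" using cases(2) by blast
      have xp: "inPE v 1 (0, x')" using SB_P[OF x'(1)] inPE_pure[of 1 x'] by simp
      have E: "\<delta> \<otimes> (0, y) = p \<oplus> (0, x') \<otimes> r" "\<delta> = q \<oplus> (0, x') \<otimes> s"
        using e by (auto simp add: XX mm y x' kA_def kB_def mmul_def)
      have dp: "inPE v 1 \<delta>" using E(2) mp1 mo xp by (simp add: Eclos)
      have "\<delta> \<otimes> (0, y) \<ominus> (0, x') \<otimes> r \<ominus> (p \<ominus> eone) = (p \<oplus> (0, x') \<otimes> r) \<ominus> (0, x') \<otimes> r \<ominus> (p \<ominus> eone)"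
        by (simp only: E(1))
      also have "\<dots> = eone" by (simp add: edefs algebra_simps)
      finally have "inPE v 1 eone" using dp yo xp mp1 mo by (metis Eclos)
      then show ?thesis using not_P1_one by blast
    qed
  next
    case False
    then obtain x where x: "x \<in> SB" "k0 = kB x" using cases(1) by blast
    have xp: "inPE v 1 (0, x)" using SB_P[OF x(1)] inPE_pure[of 1 x] by simp
    have xo: "inOE v (0, x)" using SB_O[OF x(1)] inOE_pure by blast
    show ?thesis
    proof (cases "\<exists>y\<in>SA. k0' = kA y")
      case True
      then obtain y' where y': "y' \<in> SA" "k0' = kA y'" by blast
      have yo': "inOE v (0, y')" using SA_O[OF y'(1)] inOE_pure by blast
      have E: "\<delta> = (0, y') \<otimes> p \<oplus> r" "\<delta> \<otimes> (0, x) = (0, y') \<otimes> q \<oplus> s"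
        using e by (auto simp add: XX mm x y' kA_def kB_def mmul_def)
      have dO: "inOE v \<delta>" using E(1) mo yo' by (simp add: Eclos)
      have "\<delta> \<otimes> (0, x) \<ominus> (0, y') \<otimes> q \<ominus> (s \<ominus> eone) = ((0, y') \<otimes> q \<oplus> s) \<ominus> (0, y') \<otimes> q \<ominus> (s \<ominus> eone)"
        by (simp only: E(2))
      also have "\<dots> = eone" by (simp add: edefs algebra_simps)
      finally have "inPE v 1 eone" using dO xp yo' mp1 by (metis Eclos)
      then show ?thesis using not_P1_one by blast
    next
      case False
      then obtain x' where x': "x' \<in> SB" "k0' = kB x'" using cases(2) by blast
      have xo': "inOE v (0, x')" using SB_O[OF x'(1)] inOE_pure by blast
      have E: "\<beta> = r" "\<alpha> \<oplus> \<beta> \<otimes> (0, x) = s" "\<delta> = p \<oplus> (0, x') \<otimes> r"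
          "\<delta> \<otimes> (0, x) = q \<oplus> (0, x') \<otimes> s"
        using e by (auto simp add: XX mm x x' kB_def mmul_def)
      have "\<alpha> \<ominus> eone = (\<alpha> \<oplus> \<beta> \<otimes> (0, x) \<ominus> eone) \<ominus> \<beta> \<otimes> (0, x)"
        by (simp add: edefs algebra_simps)
      also have "\<dots> = (s \<ominus> eone) \<ominus> r \<otimes> (0, x)" by (simp only: E(2)) (simp only: E(1))
      finally have a1: "inPE v n (\<alpha> \<ominus> eone)" using mp xo by (simp add: Eclos)
      have "\<delta> \<ominus> eone = (p \<ominus> eone) \<oplus> (0, x') \<otimes> r"
        by (subst E(3)) (simp add: edefs algebra_simps)
      then have d1: "inPE v n (\<delta> \<ominus> eone)" using mp xo' by (simp add: Eclos)
      have "q \<oplus> (0, x') \<otimes> (s \<ominus> eone) \<ominus> (\<delta> \<ominus> eone) \<otimes> (0, x)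
          = (q \<oplus> (0, x') \<otimes> s) \<ominus> \<delta> \<otimes> (0, x) \<oplus> (0, x) \<ominus> (0, x')"
        by (simp add: edefs algebra_simps)
      also have "\<dots> = (0, x) \<ominus> (0, x')" by (simp only: E(4) esub_self eadd_zero)
      finally have "inPE v n ((0, x) \<ominus> (0, x'))"
        using mp xo xo' d1 by (metis Eclos)
      then have "inP v (int n) (x - x')" by (simp add: inPE_def esub_def)
      then have "x = x'" using SB_dist x x' by blast
      then show ?thesis using a1 x x' by (simp add: XX)
    qed
  qed
qed


lemma chi_one: "inPE v n (a \<ominus> eone) \<Longrightarrow> chi a = 1" by (rule chitriv)

lemma cancel_right: "inG eps k \<Longrightarrow> mmul eps k (mmul eps (minv k) Z) = Z"
  by (simp add: mmul_assoc[symmetric] minv_right)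
lemma cancel_left: "inG eps k \<Longrightarrow> mmul eps (minv k) (mmul eps k Z) = Z"
  by (simp add: mmul_assoc[symmetric] minv_left)

lemma B_G: "inB eps b \<Longrightarrow> inG eps b" by (simp add: inB_def)
lemma Kn_G: "inKn v eps n k \<Longrightarrow> inG eps k" by (simp add: inKn_def inK_def)

lemma separation:
  assumes b: "inB eps b" and b': "inB eps b'" and k0: "k0 \<in> R" and k0': "k0' \<in> R"
    and k1: "inKn v eps n k1" and k1': "inKn v eps n k1'"
    and e: "mmul eps (mmul eps b k0) k1 = mmul eps (mmul eps b' k0') k1'"
  shows "k0 = k0' \<and> chi (m11 b) = chi (m11 b')"
proof -
  define X where "X = mmul eps (minv b') b"
  define m where "m = mmul eps k1' (minv k1)"
  have XB: "inB eps X" unfolding X_def using inB_mmul inB_minv b b' by blast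
  have mK: "inKn v eps n m" unfolding m_def using inKn_mmul inKn_minv k1 k1' by blast
  have "mmul eps X k0 = mmul eps (minv b') (mmul eps (mmul eps (mmul eps b k0) k1) (minv k1))"
    unfolding X_def by (simp add: mmul_assoc minv_right[OF Kn_G[OF k1]])
  also have "\<dots> = mmul eps (minv b') (mmul eps (mmul eps (mmul eps b' k0') k1') (minv k1))"
    by (simp only: e)
  also have "\<dots> = mmul eps k0' m"
    unfolding m_def by (simp add: mmul_assoc cancel_left[OF B_G[OF b']])
  finally have "mmul eps X k0 = mmul eps k0' m" .
  then have sc: "k0 = k0' \<and> inPE v n (m11 X \<ominus> eone)" using sep_core[OF XB mK k0 k0'] by blast
  have bb: "b = mmul eps b' X" unfolding X_def
    by (simp add: mmul_assoc[symmetric] minv_right[OF B_G[OF b']])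
  have "m11 b = m11 b' \<otimes> m11 X" using inB_m11_mul[OF XB, of b'] bb by simp
  then have "chi (m11 b) = chi (m11 b' \<otimes> m11 X)" by simp
  also have "\<dots> = chi (m11 b') * chi (m11 X)" using chimul inB_m11 b' XB by blast
  also have "\<dots> = chi (m11 b')" using chi_one sc by simp
  finally show ?thesis using sc by simp
qed

definition rep :: "'f qe m2 \<Rightarrow> 'f qe m2 \<Rightarrow> 'f qe m2 \<Rightarrow> bool" where
  "rep k0 g b \<longleftrightarrow> inB eps b \<and> (\<exists>k1. inKn v eps n k1 \<and> g = mmul eps (mmul eps b k0) k1)"

definition ff :: "'f qe m2 \<Rightarrow> 'f qe m2 \<Rightarrow> complex" where
  "ff k0 g = (if \<exists>b. rep k0 g b then chi (m11 (SOME b. rep k0 g b)) else 0)"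

lemma ff_val: assumes k0: "k0 \<in> R" and r: "rep k0 g b" shows "ff k0 g = chi (m11 b)"
proof -
  have r': "rep k0 g (SOME b. rep k0 g b)" using r by (rule someI)
  obtain k1 where k1: "inB eps b" "inKn v eps n k1" "g = mmul eps (mmul eps b k0) k1"
    using r unfolding rep_def by blast
  obtain k1' where k1': "inB eps (SOME b. rep k0 g b)" "inKn v eps n k1'"
     "g = mmul eps (mmul eps (SOME b. rep k0 g b) k0) k1'"
    using r' unfolding rep_def by blast
  have "chi (m11 (SOME b. rep k0 g b)) = chi (m11 b)"
    using separation[OF k1'(1) k1(1) k0 k0 k1'(2) k1(2)] k1(3) k1'(3) by simp
  then show ?thesis using r unfolding ff_def by auto
qed

lemma ff_zero: "\<not> (\<exists>b. rep k0 g b) \<Longrightarrow> ff k0 g = 0"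
  unfolding ff_def by (rule if_not_P)

lemma rep_disj: assumes "k0 \<in> R" "k \<in> R" "rep k0 g b" "rep k g b'" shows "k0 = k"
proof -
  obtain k1 where k1: "inB eps b" "inKn v eps n k1" "g = mmul eps (mmul eps b k0) k1"
    using assms(3) unfolding rep_def by blast
  obtain k1' where k1': "inB eps b'" "inKn v eps n k1'" "g = mmul eps (mmul eps b' k) k1'"
    using assms(4) unfolding rep_def by blast
  show ?thesis using separation[OF k1(1) k1'(1) assms(1,2) k1(2) k1'(2)] k1(3) k1'(3) by simp
qed

lemma R_G: "k \<in> R \<Longrightarrow> inG eps k" using R_K by (simp add: inK_def)

lemma rep_G: assumes "k0 \<in> R" "rep k0 g b" shows "inG eps g"
proof -
  obtain k1 where k1: "inB eps b" "inKn v eps n k1" "g = mmul eps (mmul eps b k0) k1"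
    using assms(2) unfolding rep_def by blast
  show ?thesis using inG_mmul[OF inG_mmul[OF B_G[OF k1(1)] R_G[OF assms(1)]] Kn_G[OF k1(2)]] k1(3) by simp
qed

lemma mid_B: "inB eps mid" by (simp add: inB_def mid_G) (simp add: mid_def)

lemma rep_self: "rep k k mid"
  unfolding rep_def using mid_B mid_Kn[of n] by auto

lemma ff_diag: assumes k0: "k0 \<in> R" and k: "k \<in> R" shows "ff k0 k = (if k = k0 then 1 else 0)"
proof (cases "k = k0")
  case True
  have "chi eone = chi eone * chi eone" using chimul[of eone eone] by simp
  then have "chi eone = 1" using chinz[of eone] by simp
  then show ?thesis using ff_val[OF k0 rep_self[of k0]] True by (simp add: mid_def)
next
  case False
  have "\<not> (\<exists>b. rep k0 k b)" using rep_disj[OF k0 k _ rep_self] False by blast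
  then show ?thesis using False ff_zero by simp
qed

lemma ff_V: assumes k0: "k0 \<in> R" shows "ff k0 \<in> VchiKn v eps chi n"
proof -
  have inv: "ff k0 (mmul eps g k) = ff k0 g" if k: "inKn v eps n k" for g k
  proof (cases "\<exists>b. rep k0 g b")
    case True
    then obtain b where r: "rep k0 g b" by blast
    then obtain k1 where k1: "inKn v eps n k1" "g = mmul eps (mmul eps b k0) k1" "inB eps b"
      unfolding rep_def by blast
    have "mmul eps g k = mmul eps (mmul eps b k0) (mmul eps k1 k)" using k1(2) by (simp add: mmul_assoc)
    then have "rep k0 (mmul eps g k) b" unfolding rep_def using k1 inKn_mmul[OF k1(1) k] by blast
    then show ?thesis using ff_val[OF k0] r by simp
  next
    case False
    have "\<not> (\<exists>b. rep k0 (mmul eps g k) b)"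
    proof
      assume "\<exists>b. rep k0 (mmul eps g k) b"
      then obtain b k1 where k1: "inKn v eps n k1" "mmul eps g k = mmul eps (mmul eps b k0) k1" "inB eps b"
        unfolding rep_def by blast
      have "g = mmul eps (mmul eps g k) (minv k)"
        by (simp add: mmul_assoc minv_right[OF Kn_G[OF k]])
      also have "\<dots> = mmul eps (mmul eps b k0) (mmul eps k1 (minv k))"
        using k1(2) by (simp add: mmul_assoc)
      finally have "rep k0 g b" unfolding rep_def using k1 inKn_mmul[OF k1(1) inKn_minv[OF k]] by blast
      then show False using False by blast
    qed
    then show ?thesis using False ff_zero by simp
  qed
  have zero: "ff k0 g = 0" if "\<not> inG eps g" for g
    using that rep_G[OF k0] ff_zero by blast
  have equi: "ff k0 (mmul eps b g) = chiB chi b * ff k0 g" if b: "inB eps b" and g: "inG eps g" for b g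
  proof (cases "\<exists>b. rep k0 g b")
    case True
    then obtain b1 k1 where k1: "inKn v eps n k1" "g = mmul eps (mmul eps b1 k0) k1" "inB eps b1"
      unfolding rep_def by blast
    have r1: "rep k0 g b1" unfolding rep_def using k1 by blast
    have "mmul eps b g = mmul eps (mmul eps (mmul eps b b1) k0) k1" using k1(2) by (simp add: mmul_assoc)
    then have r2: "rep k0 (mmul eps b g) (mmul eps b b1)" unfolding rep_def using k1 inB_mmul[OF b k1(3)]
      by blast
    have "ff k0 (mmul eps b g) = chi (m11 (mmul eps b b1))" using ff_val[OF k0 r2] .
    also have "\<dots> = chi (m11 b \<otimes> m11 b1)" using inB_m11_mul[OF k1(3)] by simp
    also have "\<dots> = chi (m11 b) * chi (m11 b1)" using chimul inB_m11 b k1(3) by blast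
    finally show ?thesis using ff_val[OF k0 r1] by (simp add: chiB_def)
  next
    case False
    have "\<not> (\<exists>b'. rep k0 (mmul eps b g) b')"
    proof
      assume "\<exists>b'. rep k0 (mmul eps b g) b'"
      then obtain b2 k1 where k1: "inKn v eps n k1" "mmul eps b g = mmul eps (mmul eps b2 k0) k1" "inB eps b2"
        unfolding rep_def by blast
      have "g = mmul eps (minv b) (mmul eps b g)" by (simp add: cancel_left[OF B_G[OF b]])
      also have "\<dots> = mmul eps (mmul eps (mmul eps (minv b) b2) k0) k1"
        using k1(2) by (simp add: mmul_assoc)
      finally have "rep k0 g (mmul eps (minv b) b2)" unfolding rep_def
        using k1 inB_mmul[OF inB_minv[OF b] k1(3)] by blast
      then show False using False by blast
    qed
    then show ?thesis using False ff_zero by simp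
  qed
  have loc: "\<forall>g. inG eps g \<longrightarrow> (\<exists>m. \<forall>k. inKn v eps m k \<longrightarrow> ff k0 (mmul eps g k) = ff k0 g)"
    using inv by blast
  show ?thesis unfolding VchiKn_def Vchi_def
    using zero equi inv loc by (auto simp: rtrans_def fun_eq_iff)
qed


lemma finite_SA: "finite SA" unfolding SA_def using Sr_card by blast
lemma finite_SB: "finite SB" unfolding SB_def using Sr_card by blast
lemma finite_R: "finite R" unfolding R_def using finite_SA finite_SB by blast

lemma card_SA: "card SA = resq v ^ n" unfolding SA_def using Sr_card by blast
lemma card_SB: "card SB = resq v ^ (n - 1)"
proof -
  have "inj_on (\<lambda>s. upi * s) (Sr (n - 1))" using upi by (auto intro: inj_onI)
  then have "card SB = card (Sr (n - 1))" unfolding SB_def by (rule card_image)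
  then show ?thesis using Sr_card by simp
qed

lemma card_R: "card R = resq v ^ (n - 1) * (resq v + 1)"
proof -
  have iA: "inj_on kA SA" by (rule inj_onI) (simp add: kA_def)
  have iB: "inj_on kB SB" by (rule inj_onI) (simp add: kB_def)
  have dj: "kA ` SA \<inter> kB ` SB = {}" by (auto simp: kA_def kB_def)
  have "card R = card (kA ` SA) + card (kB ` SB)"
    unfolding R_def by (rule card_Un_disjoint[OF finite_imageI[OF finite_SA] finite_imageI[OF finite_SB] dj])
  also have "\<dots> = resq v ^ n + resq v ^ (n - 1)"
    using card_image[OF iA] card_image[OF iB] card_SA card_SB by simp
  also have "\<dots> = resq v ^ (n - 1) * (resq v + 1)"
  proof -
    have "n = Suc (n - 1)" using n1 by simp
    then have "resq v ^ n = resq v ^ (n - 1) * resq v" by (metis power_Suc2)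
    then show ?thesis by (simp add: algebra_simps)
  qed
  finally show ?thesis .
qed

lemma expand: assumes f: "f \<in> VchiKn v eps chi n" shows "f = (\<Sum>k\<in>R. cscale (f k) (ff k))"
proof (rule ext)
  fix g
  have fV: "\<forall>g. \<not> inG eps g \<longrightarrow> f g = 0"
    "\<forall>b g. inB eps b \<longrightarrow> inG eps g \<longrightarrow> f (mmul eps b g) = chiB chi b * f g"
    "\<forall>k. inKn v eps n k \<longrightarrow> rtrans eps k f = f"
    using f unfolding VchiKn_def Vchi_def by auto
  have rhs: "(\<Sum>k\<in>R. cscale (f k) (ff k)) g = (\<Sum>k\<in>R. f k * ff k g)"
    by (simp add: sum_fun_apply cscale_def)
  show "f g = (\<Sum>k\<in>R. cscale (f k) (ff k)) g"
  proof (cases "inG eps g")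
    case False
    then have "\<forall>k\<in>R. ff k g = 0" using rep_G ff_zero by blast
    then show ?thesis using fV(1) False rhs by simp
  next
    case True
    obtain b k0 k1 where c: "inB eps b" "k0 \<in> R" "inKn v eps n k1" "g = mmul eps (mmul eps b k0) k1"
      using coverage[OF True] by blast
    have r: "rep k0 g b" unfolding rep_def using c by blast
    have others: "ff k g = 0" if "k \<in> R - {k0}" for k
    proof -
      have "\<not> (\<exists>b'. rep k g b')" using rep_disj[OF c(2) _ r] that by blast
      then show ?thesis by (rule ff_zero)
    qed
    have "(\<Sum>k\<in>R. f k * ff k g) = f k0 * ff k0 g + (\<Sum>k\<in>R - {k0}. f k * ff k g)"
      using sum.remove[OF finite_R c(2)] by blast
    also have "\<dots> = f k0 * chi (m11 b)" using others ff_val[OF c(2) r] by simp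
    finally have s: "(\<Sum>k\<in>R. f k * ff k g) = f k0 * chi (m11 b)" .
    have kG: "inG eps (mmul eps k0 k1)" using inG_mmul[OF R_G[OF c(2)] Kn_G[OF c(3)]] .
    have "f g = chiB chi b * f (mmul eps k0 k1)" using fV(2) c(1) kG c(4) by (simp add: mmul_assoc)
    also have "f (mmul eps k0 k1) = f k0" using fV(3) c(3) unfolding rtrans_def by metis
    finally show ?thesis using s rhs by (simp add: chiB_def)
  qed
qed

lemma dim_main: "cs.dim (VchiKn v eps chi n) = resq v ^ (n - 1) * (resq v + 1)"
proof -
  let ?B = "ff ` R"
  have inj: "inj_on ff R"
  proof (rule inj_onI)
    fix k k' assume k: "k \<in> R" and k': "k' \<in> R" and e: "ff k = ff k'"
    have "ff k' k = 1" using e ff_diag[OF k k] by simp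
    then show "k = k'" using ff_diag[OF k' k] by (simp split: if_splits)
  qed
  have BV: "?B \<subseteq> VchiKn v eps chi n" using ff_V by blast
  have VB: "VchiKn v eps chi n \<subseteq> cs.span ?B"
  proof
    fix f assume f: "f \<in> VchiKn v eps chi n"
    have "(\<Sum>k\<in>R. cscale (f k) (ff k)) \<in> cs.span ?B"
      by (rule cs.span_sum) (simp add: cs.span_scale cs.span_base)
    then show "f \<in> cs.span ?B" using expand[OF f] by simp
  qed
  have sp: "cs.span ?B = cs.span (VchiKn v eps chi n)"
    using cs.span_mono[OF BV] cs.span_minimal[OF VB cs.subspace_span] by blast
  have ind: "\<not> cs.dependent ?B"
  proof
    assume "cs.dependent ?B"
    then obtain t u where t: "finite t" "t \<subseteq> ?B" "(\<Sum>w\<in>t. cscale (u w) w) = 0"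
      and w: "\<exists>w\<in>t. u w \<noteq> 0"
      unfolding cs.dependent_explicit by blast
    obtain w0 where w0: "w0 \<in> t" "u w0 \<noteq> 0" using w by blast
    obtain k0 where k0: "k0 \<in> R" "w0 = ff k0" using t(2) w0(1) by blast
    have z: "(\<Sum>w\<in>t. u w * w k0) = 0"
      using fun_cong[OF t(3), of k0] by (simp add: sum_fun_apply cscale_def)
    have oth: "u w * w k0 = 0" if wt: "w \<in> t - {w0}" for w
    proof -
      obtain k where k: "k \<in> R" "w = ff k" using wt t(2) by blast
      have "k \<noteq> k0" using wt k k0 by blast
      then show ?thesis using ff_diag[OF k(1) k0(1)] k by simp
    qed
    have "(\<Sum>w\<in>t. u w * w k0) = u w0 * w0 k0 + (\<Sum>w\<in>t - {w0}. u w * w k0)"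
      using sum.remove[OF t(1) w0(1)] by blast
    also have "(\<Sum>w\<in>t - {w0}. u w * w k0) = 0" using oth by (intro sum.neutral) blast
    also have "u w0 * w0 k0 + 0 = u w0" using ff_diag[OF k0(1) k0(1)] k0 by simp
    finally show False using z w0 by simp
  qed
  have "cs.dim (VchiKn v eps chi n) = card ?B" using cs.dim_eq_card[OF sp ind] .
  also have "\<dots> = card R" using card_image[OF inj] .
  finally show ?thesis using card_R by simp
qed

end




section \<open>Odd residue field implies 2 is nonzero\<close>

lemma even_card_involution:
  assumes "finite A" "\<forall>x\<in>A. f x \<in> A \<and> f (f x) = x \<and> f x \<noteq> x" shows "even (card A)"
  using assms
proof (induction "card A" arbitrary: A rule: less_induct)
  case less
  show ?case
  proof (cases "A = {}")
    case True then show ?thesis by simp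
  next
    case False
    then obtain x where x: "x \<in> A" by blast
    define A' where "A' = A - {x, f x}"
    have fx: "f x \<in> A" "f x \<noteq> x" "f (f x) = x" using less.prems x by auto
    have inv: "\<forall>y\<in>A'. f y \<in> A' \<and> f (f y) = y \<and> f y \<noteq> y"
    proof
      fix y assume y: "y \<in> A'"
      have yA: "y \<in> A" "y \<noteq> x" "y \<noteq> f x" using y unfolding A'_def by auto
      have y1: "f y \<in> A" "f (f y) = y" "f y \<noteq> y" using less.prems yA(1) by auto
      have n1: "f y \<noteq> x"
      proof
        assume "f y = x" then have "f (f y) = f x" by simp
        then show False using y1(2) yA(3) by simp
      qed
      have n2: "f y \<noteq> f x"
      proof
        assume "f y = f x" then have "f (f y) = f (f x)" by simp
        then show False using y1(2) fx(3) yA(2) by simp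
      qed
      show "f y \<in> A' \<and> f (f y) = y \<and> f y \<noteq> y" using y1 n1 n2 unfolding A'_def by simp
    qed
    have sub: "{x, f x} \<subseteq> A" using x fx by auto
    have c2: "card {x, f x} = 2" using fx(2) by simp
    have cA: "card A' = card A - 2" unfolding A'_def
      using card_Diff_subset[of "{x, f x}" A] sub c2 by simp
    have ge: "2 \<le> card A" using card_mono[OF less.prems(1) sub] c2 by simp
    have lt: "card A' < card A" using cA ge by simp
    have finA': "finite A'" unfolding A'_def using less.prems(1) by simp
    have "even (card A')" using less.hyps[OF lt finA' inv] .
    then show ?thesis using cA ge by (simp add: even_diff_nat)
  qed
qed

context lfield
begin

lemma inP0_plus1: "inP v 0 (a + 1) = inP v 0 a"
  using inP_sum_iff[of 0 1 a] inP_1_iff by (simp add: add.commute)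

lemma class_shift: "x0 \<in> OF v \<Longrightarrow> (\<lambda>x. x + 1) ` (resrel v `` {x0}) = resrel v `` {x0 + 1}"
proof -
  assume x0: "x0 \<in> OF v"
  show ?thesis
  proof (rule set_eqI)
    fix z
    have "z \<in> (\<lambda>x. x + 1) ` (resrel v `` {x0}) \<longleftrightarrow> z - 1 \<in> resrel v `` {x0}"
    proof
      assume "z - 1 \<in> resrel v `` {x0}"
      then show "z \<in> (\<lambda>x. x + 1) ` (resrel v `` {x0})" by (rule image_eqI[rotated]) simp
    qed auto
    also have "\<dots> \<longleftrightarrow> z \<in> resrel v `` {x0 + 1}"
      using inP0_plus1[of "z - 1"] inP0_plus1[of x0]
      by (simp add: resrel_def OF_def algebra_simps)
    finally show "z \<in> (\<lambda>x. x + 1) ` (resrel v `` {x0}) \<longleftrightarrow> z \<in> resrel v `` {x0 + 1}" .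
  qed
qed

lemma two_nz: assumes odd: "odd (resq v)" shows "(2::'f) \<noteq> 0"
proof
  assume two0: "(2::'f) = 0"
  let ?s = "\<lambda>C. (\<lambda>x. x + 1) ` C"
  have "\<forall>C\<in>residue_field v. ?s C \<in> residue_field v \<and> ?s (?s C) = C \<and> ?s C \<noteq> C"
  proof
    fix C assume C: "C \<in> residue_field v"
    then obtain x0 where x0: "x0 \<in> OF v" "C = resrel v `` {x0}"
      unfolding residue_field_def by (auto elim: quotientE)
    have x1: "x0 + 1 \<in> OF v" using x0 inP0_plus1 by (simp add: OF_def)
    have s1: "?s C = resrel v `` {x0 + 1}" using class_shift x0 by simp
    have "?s (?s C) = (\<lambda>x. x + 2) ` C" by (simp add: image_image add.assoc one_add_one)
    also have "\<dots> = C" using two0 by simp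
    finally have s2: "?s (?s C) = C" .
    have "?s C \<in> residue_field v" using s1 x1 unfolding residue_field_def by (simp add: quotientI)
    moreover have "?s C \<noteq> C"
    proof
      assume "?s C = C"
      then have "x0 + 1 \<in> C" using s1 x1 equiv_class_self[OF equiv_res] by fastforce
      then have "inP v 1 (x0 - (x0 + 1))" using x0 by (simp add: resrel_def)
      then show False using inP_uminus_iff[of 1 1] inP_1_iff by simp
    qed
    ultimately show "?s C \<in> residue_field v \<and> ?s (?s C) = C \<and> ?s C \<noteq> C" using s2 by simp
  qed
  then have "even (card (residue_field v))" using even_card_involution fin by blast
  then show False using odd unfolding resq_def by simp
qed

end

theorem lemma4p3:
  fixes v :: "'f::field \<Rightarrow> int" and eps :: 'f and chi :: "'f qe \<Rightarrow> complex"
    and r n :: nat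
  assumes F: "nonarch_local_field v"
    and odd_res: "odd (resq v)"
    and eps_unit: "eps \<noteq> 0" "v eps = 0"
    and eps_nonsq: "\<not> (\<exists>y. y * y = eps)"
    and chi: "is_char_T eps chi"
    and depth: "char_depth v chi r"
    and n: "n \<ge> r + 1"
  shows "(\<forall>W. irreducible_K_subrep v eps (VchiKn v eps chi n) W \<longrightarrow> rep_depth v eps W < n) \<and>
         vector_space.dim cscale (VchiKn v eps chi n) = resq v ^ (n - 1) * (resq v + 1)"
proof
  have dv: "discrete_valuation v" and fin: "finite (residue_field v)"
    using F unfolding nonarch_local_field_def by auto
  interpret D: dvf v using dv by unfold_locales
  interpret L: lfield v using fin by unfold_locales
  have two: "(2::'f) \<noteq> 0" using L.two_nz odd_res .
  interpret S: setting v eps using eps_unit eps_nonsq two by unfold_locales auto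
  have n1: "n \<ge> 1" using n by simp
  have triv: "chi a = 1" if a: "inPE v n (esub a eone)" for a
  proof (cases "\<not> char_trivial_on v chi r \<and> char_trivial_on v chi (r + 1)")
    case True
    have "inPE v (r + 1) (esub a eone)" using S.inPE_mono[OF n a] .
    then have "inTn v (r + 1) a" unfolding inTn_def by simp
    then show ?thesis using True unfolding char_trivial_on_def by blast
  next
    case False
    then have r0: "r = 0" and t0: "char_trivial_on v chi 0" using depth unfolding char_depth_def by auto
    have a1: "inPE v 1 (esub a eone)" using S.inPE_mono[OF n1 a] .
    have "a = eadd eone (esub a eone)" by (simp add: S.edefs)
    then have ao: "inOE v a" using S.inOE_add[OF S.inOE_one S.inPE_OE[OF a1]] by simp
    have "\<not> inPE v 1 a"
    proof
      assume "inPE v 1 a"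
      then have "inPE v 1 (esub a (esub a eone))" using S.inPE_sub a1 by blast
      moreover have "esub a (esub a eone) = eone" by (simp add: S.edefs)
      ultimately have "inPE v 1 eone" by simp
      then show False by (simp add: inPE_def eone_def D.inP_1_iff)
    qed
    then have "inTn v 0 a" using ao unfolding inTn_def unitOE_def by simp
    then show ?thesis using t0 unfolding char_trivial_on_def by blast
  qed
  interpret M: main v eps n chi
    using n1 chi triv unfolding is_char_T_def by unfold_locales auto
  show "\<forall>W. irreducible_K_subrep v eps (VchiKn v eps chi n) W \<longrightarrow> rep_depth v eps W < n"
  proof (intro allI impI)
    fix W assume "irreducible_K_subrep v eps (VchiKn v eps chi n) W"
    then have WV: "W \<subseteq> VchiKn v eps chi n"
      unfolding irreducible_K_subrep_def K_subrep_def by blast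
    have "\<forall>k f. inKn v eps (n - 1 + 1) k \<longrightarrow> f \<in> W \<longrightarrow> rtrans eps k f = f"
      using WV n1 unfolding VchiKn_def by auto
    then have "rep_depth v eps W \<le> n - 1" unfolding rep_depth_def by (rule Least_le)
    then show "rep_depth v eps W < n" using n1 by simp
  qed
  show "vector_space.dim cscale (VchiKn v eps chi n) = resq v ^ (n - 1) * (resq v + 1)"
    using M.dim_main .
qed

end
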